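(* Let $F:\mathbb{R}^n\to\mathbb{R}$ be $C^2$, let $\mathbf{e}_i$ be one of the standard coordinate unit vectors, and let $L$ be a line parallel to $\mathbf{e}_i$. Suppose $\mathbf{x}^*\in L$ is a local maximum of $F$ in the $\mathbf{e}_i$ direction (i.e. there is $\varepsilon_1>0$ with $F(\mathbf{x}^*+c\,\mathbf{e}_i)<F(\mathbf{x}^* )$ for all $0<|c|<\varepsilon_1$) and that $\frac{\partial^2 F}{\partial \mathbf{e}_i^2}(\mathbf{x}^* )<0$. Then there exists $\epsilon>0$ such that for every orthogonal grid of spacing $dx<\epsilon$ having $L$ as one of its grid lines, there is a grid ridge point $\mathbf{x}^g$ of $F$ with $\|\mathbf{x}^*-\mathbf{x}^g\|\le dx$.
   Context: An orthogonal grid of spacing $dx$ in $\mathbb{R}^n$ is a set of points $\mathbf{p}+dx\,\mathbb{Z}^n$ with coordinate directions $\mathbf{e}_1,\dots,\mathbf{e}_n$; its grid lines are the lines through grid points parallel to some $\mathbf{e}_k$. A grid point $\mathbf{x}_0$ is a grid ridge point of $F$ if $F(\mathbf{x}_0)\ge F(\mathbf{x}_0\pm dx\,\mathbf{e}_k)$ (both signs) for at least one $k\in\{1,\dots,n\}$. *)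

theory Defs
  imports "HOL-Analysis.Analysis"
begin

definition C2 :: "('a::euclidean_space \<Rightarrow> real) \<Rightarrow> bool" where
  "C2 F \<longleftrightarrow> (\<exists>(F' :: 'a \<Rightarrow> 'a \<Rightarrow>\<^sub>L real) (F'' :: 'a \<Rightarrow> 'a \<Rightarrow>\<^sub>L ('a \<Rightarrow>\<^sub>L real)).
      (\<forall>x. (F has_derivative blinfun_apply (F' x)) (at x) \<and>
           (F' has_derivative blinfun_apply (F'' x)) (at x)) \<and>
      continuous_on UNIV F'')"

definition dir_deriv :: "('a::real_normed_vector \<Rightarrow> real) \<Rightarrow> 'a \<Rightarrow> 'a \<Rightarrow> real" where
  "dir_deriv F e y = deriv (\<lambda>t. F (y + t *\<^sub>R e)) 0"

definition dir_deriv2 :: "('a::real_normed_vector \<Rightarrow> real) \<Rightarrow> 'a \<Rightarrow> 'a \<Rightarrow> real" where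
  "dir_deriv2 F e x = deriv (\<lambda>s. dir_deriv F e (x + s *\<^sub>R e)) 0"

definition grid :: "'a::euclidean_space \<Rightarrow> real \<Rightarrow> 'a set" where
  "grid p dx = {x. \<exists>z :: 'a \<Rightarrow> int. x = p + (\<Sum>b\<in>Basis. (dx * of_int (z b)) *\<^sub>R b)}"

definition grid_lines :: "'a::euclidean_space \<Rightarrow> real \<Rightarrow> 'a set set" where
  "grid_lines p dx = {{g + t *\<^sub>R b | t. True} | g b. g \<in> grid p dx \<and> b \<in> Basis}"

definition grid_ridge_point :: "('a::euclidean_space \<Rightarrow> real) \<Rightarrow> 'a \<Rightarrow> real \<Rightarrow> 'a \<Rightarrow> bool" where
  "grid_ridge_point F p dx x0 \<longleftrightarrow> x0 \<in> grid p dx \<and>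
     (\<exists>k\<in>Basis. F x0 \<ge> F (x0 + dx *\<^sub>R k) \<and> F x0 \<ge> F (x0 - dx *\<^sub>R k))"

end

theory Submission imports Defs begin

lemma times_fun: "((*) c) = (\<lambda>h::real. h * c)" by (rule ext) (rule mult.commute)

lemma line_deriv:
  fixes F :: "'a::euclidean_space \<Rightarrow> real"
  assumes "\<forall>x. (F has_derivative blinfun_apply (F' x)) (at x)"
  shows "((\<lambda>t. F (y + t *\<^sub>R e)) has_real_derivative blinfun_apply (F' (y + t *\<^sub>R e)) e) (at t)"
proof -
  have l: "((\<lambda>t. y + t *\<^sub>R e) has_derivative (\<lambda>h. h *\<^sub>R e)) (at t)"
    by (auto intro!: derivative_eq_intros)
  have "((\<lambda>t. F (y + t *\<^sub>R e)) has_derivative (\<lambda>h. blinfun_apply (F' (y + t *\<^sub>R e)) (h *\<^sub>R e))) (at t)"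
    using has_derivative_compose[OF l assms[rule_format]] by simp
  then show ?thesis by (simp add: has_field_derivative_def blinfun.scaleR_right mult_commute_abs)
qed

lemma dir_deriv_eq:
  fixes F :: "'a::euclidean_space \<Rightarrow> real"
  assumes "\<forall>x. (F has_derivative blinfun_apply (F' x)) (at x)"
  shows "dir_deriv F e y = blinfun_apply (F' y) e"
  unfolding dir_deriv_def using DERIV_imp_deriv[OF line_deriv[OF assms, of y e 0]] by simp

lemma h_deriv:
  fixes F :: "'a::euclidean_space \<Rightarrow> real"
  assumes "\<forall>x. (F' has_derivative blinfun_apply (F'' x)) (at x)"
  shows "((\<lambda>s. blinfun_apply (F' (y + s *\<^sub>R e)) e) has_real_derivative
            blinfun_apply (blinfun_apply (F'' y) e) e) (at 0)"
proof -
  have l: "((\<lambda>t. y + t *\<^sub>R e) has_derivative (\<lambda>h. h *\<^sub>R e)) (at 0)"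
    by (auto intro!: derivative_eq_intros)
  have "(F' has_derivative blinfun_apply (F'' y)) (at (y + 0 *\<^sub>R e))" using assms by simp
  from has_derivative_compose[OF l this]
  have "((\<lambda>t. F' (y + t *\<^sub>R e)) has_derivative (\<lambda>h. blinfun_apply (F'' y) (h *\<^sub>R e))) (at 0)" .
  from bounded_linear.has_derivative[OF bounded_linear_apply_blinfun[of e] this]
  have "((\<lambda>s. blinfun_apply (F' (y + s *\<^sub>R e)) e) has_derivative
     (\<lambda>h. blinfun_apply (blinfun_apply (F'' y) (h *\<^sub>R e)) e)) (at 0)" .
  then show ?thesis by (simp add: has_field_derivative_def blinfun.scaleR_right blinfun.scaleR_left mult_commute_abs)
qed

lemma basis_eq:
  fixes a g b ei :: "'a::euclidean_space"
  assumes "ei \<in> Basis" "b \<in> Basis"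
    and "{a + t *\<^sub>R ei | t. True} = {g + t *\<^sub>R b | t. True}"
  shows "b = ei"
proof -
  have "g \<in> {a + t *\<^sub>R ei | t. True}" using assms(3) by (metis (mono_tags, lifting) mem_Collect_eq scale_zero_left add_0_right)
  then obtain t0 where t0: "g = a + t0 *\<^sub>R ei" by auto
  have "g + 1 *\<^sub>R b \<in> {a + t *\<^sub>R ei | t. True}" using assms(3) by blast
  then obtain t1 where t1: "g + b = a + t1 *\<^sub>R ei" by auto
  have bb: "b = (t1 - t0) *\<^sub>R ei" using t0 t1 by (simp add: algebra_simps)
  show ?thesis
  proof (rule ccontr)
    assume "b \<noteq> ei"
    then have "b \<bullet> ei = 0" using inner_not_same_Basis assms by blast
    then have "t1 - t0 = 0" using bb assms(1) by simp
    then have "b = 0" using bb by simp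
    then show False using assms(2) nonzero_Basis by blast
  qed
qed

lemma grid_shift:
  fixes p g ei :: "'a::euclidean_space"
  assumes "g \<in> grid p dx" "ei \<in> Basis"
  shows "g + (dx * of_int k) *\<^sub>R ei \<in> grid p dx"
proof -
  obtain z where z: "g = p + (\<Sum>b\<in>Basis. (dx * of_int (z b)) *\<^sub>R b)" using assms(1) unfolding grid_def by auto
  define z' where "z' = (\<lambda>b. z b + (if b = ei then k else 0))"
  have "(\<Sum>b\<in>Basis. (dx * of_int (z' b)) *\<^sub>R b) = (\<Sum>b\<in>Basis. (dx * of_int (z b)) *\<^sub>R b + (if b = ei then (dx * of_int k) *\<^sub>R ei else 0))"
    unfolding z'_def by (intro sum.cong) (auto simp: algebra_simps)
  also have "\<dots> = (\<Sum>b\<in>Basis. (dx * of_int (z b)) *\<^sub>R b) + (dx * of_int k) *\<^sub>R ei"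
    using assms(2) by (simp add: sum.distrib)
  finally show ?thesis unfolding grid_def using z by (auto intro!: exI[of _ z'] simp: algebra_simps)
qed

theorem theorem1:
  fixes F :: "'a::euclidean_space \<Rightarrow> real" and ei a xs :: 'a and L :: "'a set"
  assumes "C2 F"
    and "ei \<in> Basis"
    and "L = {a + t *\<^sub>R ei | t. True}"
    and "xs \<in> L"
    and "\<exists>\<epsilon>1>0. \<forall>c. 0 < \<bar>c\<bar> \<and> \<bar>c\<bar> < \<epsilon>1 \<longrightarrow> F (xs + c *\<^sub>R ei) < F xs"
    and "dir_deriv2 F ei xs < 0"
  shows "\<exists>\<epsilon>>0. \<forall>p dx. 0 < dx \<and> dx < \<epsilon> \<and> L \<in> grid_lines p dx \<longrightarrow>
           (\<exists>xg. grid_ridge_point F p dx xg \<and> norm (xs - xg) \<le> dx)"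
proof -
  obtain F' F'' where d1: "\<forall>x. (F has_derivative blinfun_apply (F' x)) (at x)"
    and d2: "\<forall>x. (F' has_derivative blinfun_apply (F'' x)) (at x)"
    using assms(1) unfolding C2_def by blast
  define f where "f = (\<lambda>c. F (xs + c *\<^sub>R ei))"
  define h where "h = (\<lambda>s. blinfun_apply (F' (xs + s *\<^sub>R ei)) ei)"
  have fd: "\<And>c. (f has_real_derivative h c) (at c)"
    unfolding f_def h_def by (rule line_deriv[OF d1])
  have hd: "(h has_real_derivative blinfun_apply (blinfun_apply (F'' xs) ei) ei) (at 0)"
    unfolding h_def by (rule h_deriv[OF d2])
  have "dir_deriv2 F ei xs = deriv h 0"
    unfolding dir_deriv2_def h_def dir_deriv_eq[OF d1] by simp
  also have "\<dots> = blinfun_apply (blinfun_apply (F'' xs) ei) ei"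
    using DERIV_imp_deriv[OF hd] .
  finally have hdD: "(h has_real_derivative dir_deriv2 F ei xs) (at 0)" using hd by simp
  obtain e1 where e1: "e1 > 0" "\<forall>c. 0 < \<bar>c\<bar> \<and> \<bar>c\<bar> < e1 \<longrightarrow> F (xs + c *\<^sub>R ei) < F xs"
    using assms(5) by blast
  have "\<forall>y. \<bar>0 - y\<bar> < e1 \<longrightarrow> f y \<le> f 0"
  proof (intro allI impI)
    fix y :: real assume "\<bar>0 - y\<bar> < e1"
    then show "f y \<le> f 0" using e1(2)[rule_format, of y] unfolding f_def
      by (cases "y = 0") auto
  qed
  then have h0: "h 0 = 0" using DERIV_local_max[OF fd e1(1)] by blast
  have "((\<lambda>y. (h y - h 0) / (y - 0)) \<longlongrightarrow> dir_deriv2 F ei xs) (at 0)"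
    using hdD has_field_derivative_iff by blast
  then have "eventually (\<lambda>y. (h y - h 0) / (y - 0) < 0) (at 0)"
    using order_tendstoD(2) assms(6) by blast
  then obtain \<delta> where \<delta>: "\<delta> > 0" "\<And>y. y \<noteq> 0 \<Longrightarrow> dist y 0 < \<delta> \<Longrightarrow> h y / y < 0"
    unfolding eventually_at using h0 by auto
  have hpos: "h y > 0" if "y < 0" "- \<delta> < y" for y
  proof -
    have "h y / y < 0" using \<delta>(2)[of y] that by auto
    then show ?thesis using that(1) by (simp add: divide_less_0_iff)
  qed
  have hneg: "h y < 0" if "y > 0" "y < \<delta>" for y
  proof -
    have "h y / y < 0" using \<delta>(2)[of y] that by auto
    then show ?thesis using that(1) by (simp add: divide_less_0_iff)
  qed
  show ?thesis
  proof (intro exI[of _ "\<delta>/2"] conjI allI impI)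
    show "\<delta>/2 > 0" using \<delta> by simp
    fix p and dx :: real
    assume A: "0 < dx \<and> dx < \<delta> / 2 \<and> L \<in> grid_lines p dx"
    then have dx: "0 < dx" "dx < \<delta>/2" by auto
    from A obtain g b where gb: "g \<in> grid p dx" "b \<in> Basis" "L = {g + t *\<^sub>R b | t. True}"
      unfolding grid_lines_def by blast
    have "b = ei" using basis_eq[OF assms(2) gb(2), of a g] assms(3) gb(3) by metis
    then have L: "L = {g + t *\<^sub>R ei | t. True}" using gb(3) by simp
    then obtain t where t: "xs = g + t *\<^sub>R ei" using assms(4) by auto
    define k where "k = \<lfloor>t / dx\<rfloor>"
    have k1: "dx * of_int k \<le> t"
      using floor_le_iff dx(1) unfolding k_def
      by (metis mult.commute of_int_floor_le pos_le_divide_eq)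
    have k2: "t < dx * of_int k + dx"
    proof -
      have "t / dx < of_int k + 1" unfolding k_def by linarith
      then show ?thesis using dx(1) by (simp add: divide_less_eq algebra_simps)
    qed
    define c1 where "c1 = dx * of_int k - t"
    define c2 where "c2 = c1 + dx"
    have c1: "-dx < c1" "c1 \<le> 0" using k1 k2 unfolding c1_def by auto
    have c2: "0 < c2" "c2 \<le> dx" using c1 unfolding c2_def by auto
    have gc1: "xs + c1 *\<^sub>R ei \<in> grid p dx"
    proof -
      have "xs + c1 *\<^sub>R ei = g + (dx * of_int k) *\<^sub>R ei"
        unfolding t c1_def by (simp add: algebra_simps)
      then show ?thesis using grid_shift[OF gb(1) assms(2)] by simp
    qed
    have gc2: "xs + c2 *\<^sub>R ei \<in> grid p dx"
    proof -
      have "xs + c2 *\<^sub>R ei = g + (dx * of_int (k+1)) *\<^sub>R ei"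
        unfolding t c2_def c1_def by (simp add: algebra_simps)
      then show ?thesis using grid_shift[OF gb(1) assms(2), of "k+1"] by simp
    qed
    have m1: "f (c1 - dx) \<le> f c1"
    proof -
      obtain z where z: "c1 - dx < z" "z < c1" "f c1 - f (c1 - dx) = (c1 - (c1 - dx)) * h z"
        using MVT2[of "c1 - dx" c1 f h] fd dx(1) by auto
      have "h z > 0" using hpos[of z] z c1 dx by auto
      then show ?thesis using z(3) dx(1) by (simp add: algebra_simps)
    qed
    have m2: "f (c2 + dx) \<le> f c2"
    proof -
      obtain z where z: "c2 < z" "z < c2 + dx" "f (c2 + dx) - f c2 = (c2 + dx - c2) * h z"
        using MVT2[of c2 "c2 + dx" f h] fd dx(1) by auto
      have "h z < 0" using hneg[of z] z c2 dx by auto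
      then show ?thesis using z(3) dx(1) mult_pos_neg[of dx "h z"] by (simp add: algebra_simps)
    qed
    have nei: "norm ei = 1" using assms(2) by simp
    show "\<exists>xg. grid_ridge_point F p dx xg \<and> norm (xs - xg) \<le> dx"
    proof (cases "f c2 \<le> f c1")
      case True
      have e1': "xs + c1 *\<^sub>R ei + dx *\<^sub>R ei = xs + c2 *\<^sub>R ei" unfolding c2_def by (simp add: algebra_simps)
      have e2': "xs + c1 *\<^sub>R ei - dx *\<^sub>R ei = xs + (c1 - dx) *\<^sub>R ei" by (simp add: algebra_simps)
      show ?thesis
      proof (intro exI[of _ "xs + c1 *\<^sub>R ei"] conjI)
        show "grid_ridge_point F p dx (xs + c1 *\<^sub>R ei)"
        proof -
          have "F (xs + c1 *\<^sub>R ei + dx *\<^sub>R ei) \<le> F (xs + c1 *\<^sub>R ei)"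
            unfolding e1' using True unfolding f_def .
          moreover have "F (xs + c1 *\<^sub>R ei - dx *\<^sub>R ei) \<le> F (xs + c1 *\<^sub>R ei)"
            unfolding e2' using m1 unfolding f_def .
          ultimately show ?thesis unfolding grid_ridge_point_def using gc1 assms(2) by blast
        qed
        show "norm (xs - (xs + c1 *\<^sub>R ei)) \<le> dx" using c1 nei by simp
      qed
    next
      case False
      have e1': "xs + c2 *\<^sub>R ei + dx *\<^sub>R ei = xs + (c2 + dx) *\<^sub>R ei" by (simp add: algebra_simps)
      have e2': "xs + c2 *\<^sub>R ei - dx *\<^sub>R ei = xs + c1 *\<^sub>R ei" unfolding c2_def by (simp add: algebra_simps)
      show ?thesis
      proof (intro exI[of _ "xs + c2 *\<^sub>R ei"] conjI)
        show "grid_ridge_point F p dx (xs + c2 *\<^sub>R ei)"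
        proof -
          have "F (xs + c2 *\<^sub>R ei + dx *\<^sub>R ei) \<le> F (xs + c2 *\<^sub>R ei)"
            unfolding e1' using m2 unfolding f_def .
          moreover have "F (xs + c2 *\<^sub>R ei - dx *\<^sub>R ei) \<le> F (xs + c2 *\<^sub>R ei)"
            unfolding e2' using False unfolding f_def by simp
          ultimately show ?thesis unfolding grid_ridge_point_def using gc2 assms(2) by blast
        qed
        show "norm (xs - (xs + c2 *\<^sub>R ei)) \<le> dx" using c2 nei by simp
      qed
    qed
  qed
qed

end
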